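(* Let $G$ be a connected bipartite graph with bipartition $(U,V)$, $|U|\ge|V|$. Let $V_W\subseteq V$ be the set of vertices of $V$ adjacent to a leaf, $\overline{V_W}=V\setminus V_W$, $U_L\subseteq U$ a set of leaves such that each $v\in V_W$ is adjacent to exactly one element of $U_L$ and $|U_L|=|V_W|$, and $\overline{U_L}=U\setminus U_L$. For $S\subseteq\overline{U_L}$ and $j\ge 1$ let $g_j(S)$ be the number of independent sets $\mathcal C$ of $G$ with $|\mathcal C|=j$ and $\mathcal C\cap\overline{U_L}=S$, and $g(S)=\sum_{j=1}^{\alpha(G)}(-1)^{j-1}g_j(S)$. Suppose $\overline{V_W}=\emptyset$. Then $g(S)=0$ for every nonempty $S\subseteq\overline{U_L}$, and $g(\emptyset)=0$ if $|V|$ is even, $g(\emptyset)=2$ if $|V|$ is odd.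
   Context: A leaf is a vertex with exactly one neighbor. An independent set is a set of pairwise non-adjacent vertices; $\alpha(G)$ is the maximum size of one. *)

theory Defs
  imports Main
begin

definition simple_graph :: "'a set \<Rightarrow> ('a \<Rightarrow> 'a \<Rightarrow> bool) \<Rightarrow> bool" where
  "simple_graph X E \<longleftrightarrow> finite X \<and> (\<forall>x y. E x y \<longrightarrow> x \<in> X \<and> y \<in> X)
     \<and> (\<forall>x y. E x y \<longrightarrow> E y x) \<and> (\<forall>x. \<not> E x x)"

definition connected_graph :: "'a set \<Rightarrow> ('a \<Rightarrow> 'a \<Rightarrow> bool) \<Rightarrow> bool" where
  "connected_graph X E \<longleftrightarrow> (\<forall>x\<in>X. \<forall>y\<in>X. E\<^sup>*\<^sup>* x y)"

definition bipartition :: "'a set \<Rightarrow> ('a \<Rightarrow> 'a \<Rightarrow> bool) \<Rightarrow> 'a set \<Rightarrow> 'a set \<Rightarrow> bool" where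
  "bipartition X E U V \<longleftrightarrow> X = U \<union> V \<and> U \<inter> V = {}
     \<and> (\<forall>x y. E x y \<longrightarrow> (x \<in> U \<and> y \<in> V) \<or> (x \<in> V \<and> y \<in> U))"

definition neighbors :: "('a \<Rightarrow> 'a \<Rightarrow> bool) \<Rightarrow> 'a \<Rightarrow> 'a set" where
  "neighbors E x = {y. E x y}"

definition leaf :: "('a \<Rightarrow> 'a \<Rightarrow> bool) \<Rightarrow> 'a \<Rightarrow> bool" where
  "leaf E x \<longleftrightarrow> card (neighbors E x) = 1"

definition indep_set :: "'a set \<Rightarrow> ('a \<Rightarrow> 'a \<Rightarrow> bool) \<Rightarrow> 'a set \<Rightarrow> bool" where
  "indep_set X E C \<longleftrightarrow> C \<subseteq> X \<and> (\<forall>x\<in>C. \<forall>y\<in>C. \<not> E x y)"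

definition alpha :: "'a set \<Rightarrow> ('a \<Rightarrow> 'a \<Rightarrow> bool) \<Rightarrow> nat" where
  "alpha X E = Max (card ` {C. indep_set X E C})"

definition gj :: "'a set \<Rightarrow> ('a \<Rightarrow> 'a \<Rightarrow> bool) \<Rightarrow> 'a set \<Rightarrow> nat \<Rightarrow> 'a set \<Rightarrow> nat" where
  "gj X E Ubar j S = card {C. indep_set X E C \<and> card C = j \<and> C \<inter> Ubar = S}"

definition gfun :: "'a set \<Rightarrow> ('a \<Rightarrow> 'a \<Rightarrow> bool) \<Rightarrow> 'a set \<Rightarrow> 'a set \<Rightarrow> int" where
  "gfun X E Ubar S = (\<Sum>j = 1..alpha X E. (-1) ^ (j - 1) * int (gj X E Ubar j S))"

end

theory Submission
  imports Defs
begin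

lemma inv_sum:
  fixes f :: "'b \<Rightarrow> int"
  assumes fin: "finite F" and m: "\<And>C. C\<in>F \<Longrightarrow> \<sigma> C \<in> F" and inv: "\<And>C. C\<in>F \<Longrightarrow> \<sigma> (\<sigma> C) = C"
    and neg: "\<And>C. C\<in>F \<Longrightarrow> \<sigma> C \<noteq> C \<Longrightarrow> f (\<sigma> C) = - f C"
  shows "sum f F = sum f {C\<in>F. \<sigma> C = C}"
proof -
  let ?A = "{C\<in>F. \<sigma> C \<noteq> C}"
  have "sum f ?A = sum (\<lambda>C. f (\<sigma> C)) ?A"
    apply (rule sum.reindex_bij_witness[where i=\<sigma> and j=\<sigma>])
    using m inv by (simp_all, metis, metis)
  also have "\<dots> = sum (\<lambda>C. - f C) ?A" by (rule sum.cong) (auto simp: neg)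
  also have "\<dots> = - sum f ?A" by (simp add: sum_negf)
  finally have z: "sum f ?A = 0" by simp
  have "F = ?A \<union> {C\<in>F. \<sigma> C = C}" by auto
  hence "sum f F = sum f ?A + sum f {C\<in>F. \<sigma> C = C}"
    using fin by (metis (no_types, lifting) sum.union_disjoint disjoint_iff finite_Un mem_Collect_eq)
  thus ?thesis using z by simp
qed

lemma gfun_alt:
  assumes fX: "finite X"
  shows "gfun X E Ubar S = - (\<Sum>C\<in>{C. indep_set X E C \<and> C \<inter> Ubar = S \<and> C \<noteq> {}}. (-1::int)^card C)"
proof -
  let ?F = "{C. indep_set X E C \<and> C \<inter> Ubar = S \<and> C \<noteq> {}}"
  have finI: "finite {C. indep_set X E C}"
    by (rule finite_subset[of _ "Pow X"]) (auto simp: indep_set_def fX)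
  have finF: "finite ?F" by (rule finite_subset[OF _ finI]) auto
  have sub: "card ` ?F \<subseteq> {1..alpha X E}"
  proof
    fix n assume "n \<in> card ` ?F"
    then obtain C where C: "C \<in> ?F" "n = card C" by auto
    have "finite C" using C fX by (auto simp: indep_set_def intro: finite_subset)
    hence "n \<ge> 1" using C by (simp add: Suc_le_eq card_gt_0_iff)
    moreover have "n \<le> alpha X E" unfolding alpha_def using C finI
      by (intro Max_ge) auto
    ultimately show "n \<in> {1..alpha X E}" by simp
  qed
  have "(\<Sum>C\<in>?F. (-1::int)^(card C - 1)) = (\<Sum>j=1..alpha X E. (\<Sum>C\<in>{C\<in>?F. card C = j}. (-1::int)^(card C - 1)))"
    by (rule sum.group[symmetric, OF finF _ sub]) simp
  also have "\<dots> = gfun X E Ubar S"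
    unfolding gfun_def gj_def
  proof (rule sum.cong)
    fix j assume j: "j \<in> {1..alpha X E}"
    have e: "{C\<in>?F. card C = j} = {C. indep_set X E C \<and> card C = j \<and> C \<inter> Ubar = S}"
      using j by auto
    show "(\<Sum>C\<in>{C\<in>?F. card C = j}. (-1::int)^(card C - 1)) = (-1) ^ (j - 1) * int (card {C. indep_set X E C \<and> card C = j \<and> C \<inter> Ubar = S})"
      unfolding e by simp
  qed simp
  also have "(\<Sum>C\<in>?F. (-1::int)^(card C - 1)) = (\<Sum>C\<in>?F. - ((-1::int)^card C))"
  proof (rule sum.cong)
    fix C assume C: "C \<in> ?F"
    have "finite C" using C fX by (auto simp: indep_set_def intro: finite_subset)
    hence "card C \<ge> 1" using C by (simp add: Suc_le_eq card_gt_0_iff)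
    then obtain k where "card C = Suc k" by (cases "card C") auto
    thus "(-1::int)^(card C - 1) = - ((-1::int)^card C)" by simp
  qed simp
  finally show ?thesis by (simp add: sum_negf)
qed


definition tog :: "'a \<Rightarrow> 'a set \<Rightarrow> 'a set" where
  "tog a C = (if a \<in> C then C - {a} else insert a C)"

lemma tog_tog[simp]: "tog a (tog a C) = C"
  unfolding tog_def by auto

lemma tog_ne: "tog a C \<noteq> C"
  unfolding tog_def by auto

lemma tog_sign: "finite C \<Longrightarrow> (-1::int) ^ card (tog a C) = - ((-1) ^ card C)"
proof (cases "a \<in> C")
  case True
  assume f: "finite C"
  show ?thesis using True f by (cases "card C") (auto simp: tog_def)
next
  case False
  assume f: "finite C"
  thus ?thesis using False by (simp add: tog_def)
qed

theorem lemma5p6: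
  fixes X U V VW UL :: "'a set" and E :: "'a \<Rightarrow> 'a \<Rightarrow> bool"
  assumes "simple_graph X E"
    and "connected_graph X E"
    and "bipartition X E U V"
    and "card U \<ge> card V"
    and "V \<noteq> {}"
    and "VW = {v \<in> V. \<exists>u. E v u \<and> leaf E u}"
    and "UL \<subseteq> U" and "\<forall>u\<in>UL. leaf E u"
    and "\<forall>v\<in>VW. card (neighbors E v \<inter> UL) = 1"
    and "card UL = card VW"
    and "V - VW = {}"
  shows "(\<forall>S. S \<subseteq> U - UL \<and> S \<noteq> {} \<longrightarrow> gfun X E (U - UL) S = 0)
    \<and> (even (card V) \<longrightarrow> gfun X E (U - UL) {} = 0)
    \<and> (odd (card V) \<longrightarrow> gfun X E (U - UL) {} = 2)"
proof -
  have fX: "finite X" and inX: "\<And>x y. E x y \<Longrightarrow> x \<in> X \<and> y \<in> X"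
    and sym: "\<And>x y. E x y \<Longrightarrow> E y x" and irr: "\<And>x. \<not> E x x"
    using assms(1) unfolding simple_graph_def by auto
  have XUV: "X = U \<union> V" and disj: "U \<inter> V = {}"
    and bip: "\<And>x y. E x y \<Longrightarrow> (x \<in> U \<and> y \<in> V) \<or> (x \<in> V \<and> y \<in> U)"
    using assms(3) unfolding bipartition_def by auto
  have VW: "VW = V" using assms(6,11) by auto
  have "\<forall>v\<in>V. \<exists>u. neighbors E v \<inter> UL = {u}"
    using assms(9) VW by (metis card_1_singletonE)
  then obtain l where l: "\<And>v. v \<in> V \<Longrightarrow> neighbors E v \<inter> UL = {l v}"
    by metis
  have lUL: "\<And>v. v \<in> V \<Longrightarrow> l v \<in> UL" and lE: "\<And>v. v \<in> V \<Longrightarrow> E v (l v)"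
    using l unfolding neighbors_def by blast+
  have lnb: "neighbors E (l v) = {v}" if v: "v \<in> V" for v
  proof -
    have "card (neighbors E (l v)) = 1" using assms(8) lUL[OF v] unfolding leaf_def by auto
    then obtain w where w: "neighbors E (l v) = {w}" by (metis card_1_singletonE)
    have "v \<in> neighbors E (l v)" using sym[OF lE[OF v]] unfolding neighbors_def by auto
    thus ?thesis using w by auto
  qed
  have lV: "\<And>v. v \<in> V \<Longrightarrow> l v \<notin> V" using lUL assms(7) disj by blast
  have lUb: "\<And>v. v \<in> V \<Longrightarrow> l v \<notin> U - UL" using lUL by blast
  have lX: "\<And>v. v \<in> V \<Longrightarrow> l v \<in> X" using lE inX by blast
  have finC: "\<And>C. indep_set X E C \<Longrightarrow> finite C"
    using fX unfolding indep_set_def by (auto intro: finite_subset)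
  have toggle: "indep_set X E (tog (l w) C)" if C: "indep_set X E C" and w: "w \<in> V" "w \<notin> C" for C w
  proof (cases "l w \<in> C")
    case True
    thus ?thesis using C unfolding tog_def indep_set_def by auto
  next
    case False
    have n1: "\<And>x. E (l w) x \<Longrightarrow> x = w" using lnb[OF w(1)] unfolding neighbors_def by auto
    have "\<forall>x\<in>C. \<not> E (l w) x \<and> \<not> E x (l w)" using n1 sym w(2) by blast
    thus ?thesis using C False lX[OF w(1)] irr unfolding tog_def indep_set_def by auto
  qed
  have tog_int: "\<And>C w. w \<in> V \<Longrightarrow> tog (l w) C \<inter> (U - UL) = C \<inter> (U - UL)"
    using lUb unfolding tog_def by auto
  have tog_V: "\<And>C w. w \<in> V \<Longrightarrow> tog (l w) C \<inter> V = C \<inter> V"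
    using lV unfolding tog_def by auto
  have finI: "finite {C. indep_set X E C}"
    by (rule finite_subset[of _ "Pow X"]) (auto simp: indep_set_def fX)
  have part1: "gfun X E (U - UL) S = 0" if S: "S \<subseteq> U - UL" "S \<noteq> {}" for S
  proof -
    obtain s where s: "s \<in> S" using S by auto
    have sU: "s \<in> U" "s \<in> X" using s S XUV by auto
    obtain v where v: "v \<in> V" using assms(5) by auto
    have "E\<^sup>*\<^sup>* s v" using assms(2) sU v XUV unfolding connected_graph_def by auto
    moreover have "s \<noteq> v" using sU v disj by auto
    ultimately obtain y where sy: "E s y" by (metis converse_rtranclpE)
    have yV: "y \<in> V" using bip[OF sy] sU disj by auto
    let ?F = "{C. indep_set X E C \<and> C \<inter> (U - UL) = S \<and> C \<noteq> {}}"
    have finF: "finite ?F" by (rule finite_subset[OF _ finI]) auto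
    have mem: "s \<in> C" "y \<notin> C" if "C \<in> ?F" for C
      using that s sy unfolding indep_set_def by auto
    have "(\<Sum>C\<in>?F. (-1::int)^card C) = (\<Sum>C\<in>{C\<in>?F. tog (l y) C = C}. (-1::int)^card C)"
    proof (rule inv_sum[OF finF])
      fix C assume C: "C \<in> ?F"
      have "s \<in> tog (l y) C" using mem[OF C] s S lUb[OF yV] unfolding tog_def by auto
      thus "tog (l y) C \<in> ?F" using toggle[OF _ yV mem(2)[OF C]] C tog_int[OF yV] by auto
      show "tog (l y) (tog (l y) C) = C" by simp
      show "(-1::int)^card (tog (l y) C) = - ((-1)^card C)" using C finC[of C] tog_sign[of C "l y"] by auto
    qed
    moreover have "{C\<in>?F. tog (l y) C = C} = {}" using tog_ne[of "l y"] by (metis (mono_tags, lifting) empty_Collect_eq)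
    hence "(\<Sum>C\<in>{C\<in>?F. tog (l y) C = C}. (-1::int)^card C) = 0" by (simp only:) simp
    ultimately show ?thesis using gfun_alt[OF fX] by simp
  qed
  define pick where "pick C = (SOME w. w \<in> V \<and> w \<notin> C)" for C
  have pick: "pick C \<in> V \<and> pick C \<notin> C" if "\<not> V \<subseteq> C" for C
    unfolding pick_def using that by (metis (mono_tags, lifting) someI_ex subsetI)
  have pick_eq: "pick C = pick D" if "C \<inter> V = D \<inter> V" for C D
  proof -
    have "(\<lambda>w. w \<in> V \<and> w \<notin> C) = (\<lambda>w. w \<in> V \<and> w \<notin> D)" using that by blast
    thus ?thesis unfolding pick_def by simp
  qed
  define \<sigma> where "\<sigma> C = (if V \<subseteq> C then C else tog (l (pick C)) C)" for C
  let ?F0 = "{C. indep_set X E C \<and> C \<inter> (U - UL) = {}}"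
  have finF0: "finite ?F0" by (rule finite_subset[OF _ finI]) auto
  have "(\<Sum>C\<in>?F0. (-1::int)^card C) = (\<Sum>C\<in>{C\<in>?F0. \<sigma> C = C}. (-1::int)^card C)"
  proof (rule inv_sum[OF finF0])
    fix C assume C: "C \<in> ?F0"
    show "\<sigma> C \<in> ?F0"
    proof (cases "V \<subseteq> C")
      case False
      note p = pick[OF False]
      show ?thesis using False toggle[of C "pick C"] p C tog_int[of "pick C" C] unfolding \<sigma>_def by auto
    qed (use C \<sigma>_def in auto)
    show "\<sigma> (\<sigma> C) = C"
    proof (cases "V \<subseteq> C")
      case False
      note p = pick[OF False]
      have e: "tog (l (pick C)) C \<inter> V = C \<inter> V" using tog_V p by blast
      hence nV: "\<not> V \<subseteq> tog (l (pick C)) C" using False by blast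
      have "pick (tog (l (pick C)) C) = pick C" using pick_eq[OF e] .
      thus ?thesis using False nV unfolding \<sigma>_def by simp
    qed (simp add: \<sigma>_def)
    show "\<sigma> C \<noteq> C \<Longrightarrow> (-1::int)^card (\<sigma> C) = - ((-1)^card C)"
      using C finC[of C] tog_sign[of C "l (pick C)"] unfolding \<sigma>_def by (cases "V \<subseteq> C") auto
  qed
  also have "{C\<in>?F0. \<sigma> C = C} = {V}"
  proof
    show "{V} \<subseteq> {C\<in>?F0. \<sigma> C = C}"
      using bip disj XUV unfolding \<sigma>_def indep_set_def by auto
    show "{C\<in>?F0. \<sigma> C = C} \<subseteq> {V}"
    proof
      fix C assume C: "C \<in> {C\<in>?F0. \<sigma> C = C}"
      have VC: "V \<subseteq> C" using C tog_ne[of "l (pick C)" C] unfolding \<sigma>_def by (auto split: if_splits)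
      have "C \<subseteq> V"
      proof
        fix x assume x: "x \<in> C"
        show "x \<in> V"
        proof (rule ccontr)
          assume "x \<notin> V"
          hence "x \<in> UL" using x C XUV unfolding indep_set_def by auto
          hence "leaf E x" using assms(8) by auto
          then obtain w where "neighbors E x = {w}" unfolding leaf_def by (metis card_1_singletonE)
          hence w: "E x w" unfolding neighbors_def by auto
          have "w \<in> V" using bip[OF w] \<open>x \<notin> V\<close> by auto
          thus False using w x VC C unfolding indep_set_def by auto
        qed
      qed
      thus "C \<in> {V}" using VC by auto
    qed
  qed
  finally have s0: "(\<Sum>C\<in>?F0. (-1::int)^card C) = (-1)^card V" by simp
  have "{} \<in> ?F0" unfolding indep_set_def by auto
  hence "(\<Sum>C\<in>?F0. (-1::int)^card C) = 1 + (\<Sum>C\<in>?F0 - {{}}. (-1::int)^card C)"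
    using finF0 sum.remove[OF finF0 \<open>{} \<in> ?F0\<close>, of "\<lambda>C. (-1::int)^card C"] by simp
  moreover have "?F0 - {{}} = {C. indep_set X E C \<and> C \<inter> (U - UL) = {} \<and> C \<noteq> {}}" by auto
  ultimately have g0: "gfun X E (U - UL) {} = 1 - (-1)^card V"
    using gfun_alt[OF fX, of E "U - UL" "{}"] s0 by simp
  show ?thesis using part1 g0 by auto
qed

end
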